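(* Let $p\in\mathbb{C}\setminus\{0\}$ and let $k\ge0$, $N\ge0$ be integers. Let $\mathcal{G}_{k,N}$ be the Lie algebra with $\mathbb{C}$-basis $\{J_{i,m}\mid 0\le i\le k,\ 0\le m\le N\}$ and brackets $[J_{i,m},J_{j,n}]=((j+p)(m+1)-(i+p)(n+1))J_{i+j,m+n}$ if $i+j\le k$ and $m+n\le N$, and $[J_{i,m},J_{j,n}]=0$ otherwise. If $V$ is a nontrivial finite-dimensional irreducible $\mathcal{G}_{k,N}$-module, then $\dim V=1$. *)

theory Defs
  imports "Jordan_Normal_Form.Matrix"
begin

definition gcoef :: "complex \<Rightarrow> nat \<Rightarrow> nat \<Rightarrow> nat \<Rightarrow> nat \<Rightarrow> complex" where
  "gcoef p i m j n = (of_nat j + p) * (of_nat m + 1) - (of_nat i + p) * (of_nat n + 1)"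

definition is_GkN_rep :: "complex \<Rightarrow> nat \<Rightarrow> nat \<Rightarrow> nat \<Rightarrow> (nat \<Rightarrow> nat \<Rightarrow> complex mat) \<Rightarrow> bool" where
  "is_GkN_rep p k N d rho \<longleftrightarrow>
     (\<forall>i m. i \<le> k \<longrightarrow> m \<le> N \<longrightarrow> rho i m \<in> carrier_mat d d) \<and>
     (\<forall>i m j n. i \<le> k \<longrightarrow> m \<le> N \<longrightarrow> j \<le> k \<longrightarrow> n \<le> N \<longrightarrow>
        rho i m * rho j n - rho j n * rho i m =
          (if i + j \<le> k \<and> m + n \<le> N
           then gcoef p i m j n \<cdot>\<^sub>m rho (i + j) (m + n)
           else 0\<^sub>m d d))"

definition cvec_subspace :: "nat \<Rightarrow> complex vec set \<Rightarrow> bool" where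
  "cvec_subspace d W \<longleftrightarrow> W \<subseteq> carrier_vec d \<and> 0\<^sub>v d \<in> W \<and>
     (\<forall>v\<in>W. \<forall>w\<in>W. v + w \<in> W) \<and> (\<forall>c. \<forall>v\<in>W. c \<cdot>\<^sub>v v \<in> W)"

definition GkN_submodule :: "nat \<Rightarrow> nat \<Rightarrow> nat \<Rightarrow> (nat \<Rightarrow> nat \<Rightarrow> complex mat) \<Rightarrow> complex vec set \<Rightarrow> bool" where
  "GkN_submodule k N d rho W \<longleftrightarrow> cvec_subspace d W \<and>
     (\<forall>i m. i \<le> k \<longrightarrow> m \<le> N \<longrightarrow> (\<forall>v\<in>W. rho i m *\<^sub>v v \<in> W))"

definition GkN_irreducible :: "nat \<Rightarrow> nat \<Rightarrow> nat \<Rightarrow> (nat \<Rightarrow> nat \<Rightarrow> complex mat) \<Rightarrow> bool" where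
  "GkN_irreducible k N d rho \<longleftrightarrow> d > 0 \<and>
     (\<forall>W. GkN_submodule k N d rho W \<longrightarrow> W = {0\<^sub>v d} \<or> W = carrier_vec d)"

definition GkN_nontrivial :: "nat \<Rightarrow> nat \<Rightarrow> nat \<Rightarrow> (nat \<Rightarrow> nat \<Rightarrow> complex mat) \<Rightarrow> bool" where
  "GkN_nontrivial k N d rho \<longleftrightarrow> (\<exists>i m. i \<le> k \<and> m \<le> N \<and> rho i m \<noteq> 0\<^sub>m d d)"

end

theory Submission
  imports Defs "Jordan_Normal_Form.Char_Poly"
begin

definition trc :: "complex mat \<Rightarrow> nat \<Rightarrow> complex" where
  "trc A d = (\<Sum>i<d. A $$ (i,i))"

lemma trc_comm:
  assumes "A \<in> carrier_mat d d" "B \<in> carrier_mat d d"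
  shows "trc (A * B) d = trc (B * A) d"
proof -
  have "trc (A * B) d = (\<Sum>i<d. \<Sum>j<d. A $$ (i,j) * B $$ (j,i))"
    using assms by (simp add: trc_def scalar_prod_def row_def col_def atLeast0LessThan)
  also have "\<dots> = (\<Sum>j<d. \<Sum>i<d. B $$ (j,i) * A $$ (i,j))"
    by (subst sum.swap) (simp add: mult.commute)
  also have "\<dots> = trc (B * A) d"
    using assms by (simp add: trc_def scalar_prod_def row_def col_def atLeast0LessThan)
  finally show ?thesis .
qed

lemma trc_minus: "A \<in> carrier_mat d d \<Longrightarrow> B \<in> carrier_mat d d \<Longrightarrow> trc (A - B) d = trc A d - trc B d"
  by (simp add: trc_def sum_subtractf)

lemma trc_smult: "A \<in> carrier_mat d d \<Longrightarrow> trc (c \<cdot>\<^sub>m A) d = c * trc A d"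
  by (simp add: trc_def sum_distrib_left)

lemma trc_one: "trc (1\<^sub>m d) d = of_nat d"
  by (simp add: trc_def)

lemma ex_eigen:
  assumes A: "(A :: complex mat) \<in> carrier_mat d d" and d: "d > 0"
  shows "\<exists>v \<mu>. v \<in> carrier_vec d \<and> v \<noteq> 0\<^sub>v d \<and> A *\<^sub>v v = \<mu> \<cdot>\<^sub>v v"
proof -
  have "degree (char_poly A) = d" using degree_monic_char_poly[OF A] by simp
  hence "\<not> constant (poly (char_poly A))" using d constant_degree by force
  then obtain z where "poly (char_poly A) z = 0" using fundamental_theorem_of_algebra by blast
  hence "eigenvalue A z" using eigenvalue_root_char_poly[OF A] by simp
  then show ?thesis using A unfolding eigenvalue_def eigenvector_def by auto
qed

lemma mat_zero_of_kernel:
  assumes M: "(M :: complex mat) \<in> carrier_mat d d"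
    and rep: "\<forall>i m. i \<le> k \<longrightarrow> m \<le> N \<longrightarrow> rho i m \<in> carrier_mat d d"
    and irr: "GkN_irreducible k N d rho"
    and inv: "\<And>i m v. i \<le> k \<Longrightarrow> m \<le> N \<Longrightarrow> v \<in> carrier_vec d \<Longrightarrow> M *\<^sub>v v = 0\<^sub>v d
        \<Longrightarrow> M *\<^sub>v (rho i m *\<^sub>v v) = 0\<^sub>v d"
    and ex: "v0 \<in> carrier_vec d" "v0 \<noteq> 0\<^sub>v d" "M *\<^sub>v v0 = 0\<^sub>v d"
  shows "M = 0\<^sub>m d d"
proof -
  define W where "W = {v \<in> carrier_vec d. M *\<^sub>v v = 0\<^sub>v d}"
  have sub: "cvec_subspace d W"
    unfolding cvec_subspace_def W_def
  proof (intro conjI ballI allI)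
    show "0\<^sub>v d \<in> {v \<in> carrier_vec d. M *\<^sub>v v = 0\<^sub>v d}" using M by auto
  next
    fix v w assume "v \<in> {v \<in> carrier_vec d. M *\<^sub>v v = 0\<^sub>v d}" "w \<in> {v \<in> carrier_vec d. M *\<^sub>v v = 0\<^sub>v d}"
    then show "v + w \<in> {v \<in> carrier_vec d. M *\<^sub>v v = 0\<^sub>v d}"
      using M by (auto simp: mult_add_distrib_mat_vec)
  next
    fix c v assume "v \<in> {v \<in> carrier_vec d. M *\<^sub>v v = 0\<^sub>v d}"
    then show "c \<cdot>\<^sub>v v \<in> {v \<in> carrier_vec d. M *\<^sub>v v = 0\<^sub>v d}"
      using M by (auto simp: mult_mat_vec)
  qed auto
  have "GkN_submodule k N d rho W"
    unfolding GkN_submodule_def using sub inv rep by (auto simp: W_def intro!: mult_mat_vec_carrier)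
  with irr have "W = {0\<^sub>v d} \<or> W = carrier_vec d" unfolding GkN_irreducible_def by blast
  moreover have "v0 \<in> W" using ex by (auto simp: W_def)
  ultimately have "W = carrier_vec d" using ex by auto
  have "\<And>v. v \<in> carrier_vec d \<Longrightarrow> M *\<^sub>v v = 0\<^sub>m d d *\<^sub>v v"
  proof -
    fix v :: "complex vec" assume v: "v \<in> carrier_vec d"
    with \<open>W = carrier_vec d\<close> have "M *\<^sub>v v = 0\<^sub>v d" by (auto simp: W_def)
    moreover have "0\<^sub>m d d *\<^sub>v v = 0\<^sub>v d" using v by (intro eq_vecI) auto
    ultimately show "M *\<^sub>v v = 0\<^sub>m d d *\<^sub>v v" by simp
  qed
  show ?thesis
  proof (rule eq_matI)
    fix i j assume ij: "i < dim_row (0\<^sub>m d d :: complex mat)" "j < dim_col (0\<^sub>m d d :: complex mat)"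
    have "(M *\<^sub>v unit_vec d j) $ i = (0\<^sub>m d d *\<^sub>v unit_vec d j) $ i"
      using \<open>\<And>v. v \<in> carrier_vec d \<Longrightarrow> M *\<^sub>v v = 0\<^sub>m d d *\<^sub>v v\<close> ij by simp
    then show "M $$ (i, j) = 0\<^sub>m d d $$ (i, j)" using ij M by simp
  qed (use M in auto)
qed

lemma mat_minus_eq0:
  assumes "(A :: complex mat) \<in> carrier_mat d d" "B \<in> carrier_mat d d" "A - B = 0\<^sub>m d d"
  shows "A = B"
proof -
  have *: "A $$ (i, j) = B $$ (i, j)" if ij: "i < d" "j < d" for i j
  proof -
    have "(A - B) $$ (i,j) = 0" using assms ij by simp
    moreover have "(A - B) $$ (i,j) = A $$ (i,j) - B $$ (i,j)" using assms(1,2) ij by simp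
    ultimately show ?thesis by (metis eq_iff_diff_eq_0)
  qed
  show ?thesis using assms * by (intro eq_matI) auto
qed

lemma smult_mat_vec_assoc:
  assumes "(A :: complex mat) \<in> carrier_mat nr nc" "v \<in> carrier_vec nc"
  shows "(c \<cdot>\<^sub>m A) *\<^sub>v v = c \<cdot>\<^sub>v (A *\<^sub>v v)"
  using assms by (intro eq_vecI) (auto simp: scalar_prod_def sum_distrib_left mult.assoc)

lemma mat_vec_zero0[simp]:
  "(A :: complex mat) \<in> carrier_mat nr nc \<Longrightarrow> A *\<^sub>v 0\<^sub>v nc = 0\<^sub>v nr"
  by (intro eq_vecI) auto

lemma smult_vec_zero0[simp]: "(c::complex) \<cdot>\<^sub>v 0\<^sub>v n = 0\<^sub>v n"
  by (intro eq_vecI) auto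

lemma vec_minus_eq0:
  assumes "(a :: complex vec) \<in> carrier_vec n" "b \<in> carrier_vec n" "a - b = 0\<^sub>v n"
  shows "a = b"
proof (rule eq_vecI)
  fix i assume i: "i < dim_vec b"
  have "(a - b) $ i = 0" using assms i by simp
  moreover have "(a - b) $ i = a $ i - b $ i" using assms(1,2) i by simp
  ultimately show "a $ i = b $ i" by (metis eq_iff_diff_eq_0)
qed (use assms in auto)

lemma smult_zero_left0[simp]: "(X :: complex mat) \<in> carrier_mat nr nc \<Longrightarrow> 0 \<cdot>\<^sub>m X = 0\<^sub>m nr nc"
  by (intro eq_matI) auto

lemma trc_zero: "trc (0\<^sub>m d d) d = 0"
  by (simp add: trc_def)

lemma vanish:
  assumes p: "p \<noteq> 0" and rep: "is_GkN_rep p k N d rho" and irr: "GkN_irreducible k N d rho"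
  shows "j \<le> k \<Longrightarrow> n \<le> N \<Longrightarrow> 0 < j + n \<Longrightarrow> rho j n = 0\<^sub>m d d"
proof (induction "k + N - (j + n)" arbitrary: j n rule: less_induct)
  case less
  have car: "\<And>i m. i \<le> k \<Longrightarrow> m \<le> N \<Longrightarrow> rho i m \<in> carrier_mat d d"
    using rep unfolding is_GkN_rep_def by blast
  have br: "\<And>i m j n. i \<le> k \<Longrightarrow> m \<le> N \<Longrightarrow> j \<le> k \<Longrightarrow> n \<le> N \<Longrightarrow>
        rho i m * rho j n - rho j n * rho i m =
          (if i + j \<le> k \<and> m + n \<le> N
           then gcoef p i m j n \<cdot>\<^sub>m rho (i + j) (m + n)
           else 0\<^sub>m d d)"
    using rep unfolding is_GkN_rep_def by blast
  have d0: "d > 0" using irr unfolding GkN_irreducible_def by blast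
  define X where "X = rho j n"
  define A where "A = rho 0 0"
  have Xc: "X \<in> carrier_mat d d" using car less.prems X_def by simp
  have Ac: "A \<in> carrier_mat d d" using car A_def by simp
  have comm: "rho i m * X = X * rho i m" if im: "i \<le> k" "m \<le> N" "0 < i + m" for i m
  proof -
    have "rho i m * X - X * rho i m = 0\<^sub>m d d"
    proof (cases "i + j \<le> k \<and> m + n \<le> N")
      case True
      have "rho (i + j) (m + n) = 0\<^sub>m d d"
        using True im less by (intro less.hyps) auto
      then show ?thesis using br[of i m j n] True im less.prems X_def by simp
    next
      case False
      then show ?thesis using br[of i m j n] im less.prems X_def by auto
    qed
    moreover have "rho i m * X \<in> carrier_mat d d" "X * rho i m \<in> carrier_mat d d"
      using car[OF im(1,2)] Xc by auto
    ultimately show ?thesis using mat_minus_eq0 by blast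
  qed
  define c where "c = of_nat j - p * of_nat n"
  have gc: "gcoef p 0 0 j n = c" unfolding c_def gcoef_def by (simp add: algebra_simps)
  have AX: "A * X - X * A = c \<cdot>\<^sub>m X"
    using br[of 0 0 j n] less.prems unfolding A_def X_def gc[symmetric]
    by simp
  show ?case
  proof (cases "c = 0")
    case False
    have "det X = 0"
    proof (rule ccontr)
      assume "det X \<noteq> 0"
      from det_non_zero_imp_unit[OF Xc this]
      obtain Y where Yc: "Y \<in> carrier_mat d d" and YX: "Y * X = 1\<^sub>m d" and XY: "X * Y = 1\<^sub>m d"
        unfolding Units_def ring_mat_def by auto
      have AXc: "A * X \<in> carrier_mat d d" and XAc: "X * A \<in> carrier_mat d d" using Ac Xc by auto
      have "(A * X - X * A) * Y = (A * X) * Y - (X * A) * Y"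
        by (rule minus_mult_distrib_mat[OF AXc XAc Yc])
      also have "(A * X) * Y = A * (X * Y)" using Ac Xc Yc by simp
      also have "(X * A) * Y = X * (A * Y)" using Ac Xc Yc by simp
      finally have "(A * X - X * A) * Y = A - X * (A * Y)"
        using XY Ac by simp
      moreover have "(A * X - X * A) * Y = c \<cdot>\<^sub>m 1\<^sub>m d"
        using AX XY mult_smult_assoc_mat[OF Xc Yc, of c] by simp
      ultimately have eq: "A - X * (A * Y) = c \<cdot>\<^sub>m 1\<^sub>m d" by simp
      have "trc (A - X * (A * Y)) d = trc A d - trc ((A * Y) * X) d"
        using Ac Xc Yc trc_comm[of X d "A * Y"] by (simp add: trc_minus)
      also have "(A * Y) * X = A"
        using Ac Xc Yc YX by simp
      finally have "trc (A - X * (A * Y)) d = 0" by simp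
      moreover have "trc (c \<cdot>\<^sub>m 1\<^sub>m d) d = c * of_nat d"
        by (simp add: trc_smult trc_one)
      ultimately have "c * of_nat d = 0" using eq by simp
      thus False using False d0 by simp
    qed
    then obtain v where v: "v \<in> carrier_vec d" "v \<noteq> 0\<^sub>v d" "X *\<^sub>v v = 0\<^sub>v d"
      using det_0_iff_vec_prod_zero[OF Xc] by blast
    have "X = 0\<^sub>m d d"
    proof (rule mat_zero_of_kernel[OF Xc _ irr _ v])
      show "\<forall>i m. i \<le> k \<longrightarrow> m \<le> N \<longrightarrow> rho i m \<in> carrier_mat d d" using car by blast
    next
      fix i m and w :: "complex vec"
      assume im: "i \<le> k" "m \<le> N" and w: "w \<in> carrier_vec d" "X *\<^sub>v w = 0\<^sub>v d"
      have R: "rho i m \<in> carrier_mat d d" using car im by simp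
      show "X *\<^sub>v (rho i m *\<^sub>v w) = 0\<^sub>v d"
      proof (cases "i + m = 0")
        case True
        hence ii: "rho i m = A" using A_def by simp
        have "(A * X - X * A) *\<^sub>v w = (c \<cdot>\<^sub>m X) *\<^sub>v w" using AX by simp
        also have "\<dots> = 0\<^sub>v d" using w Xc by (simp add: smult_mat_vec_assoc)
        finally have "(A * X) *\<^sub>v w - (X * A) *\<^sub>v w = 0\<^sub>v d"
          using minus_mult_distrib_mat_vec[of "A * X" d d "X * A" w] Ac Xc w by simp
        moreover have "(A * X) *\<^sub>v w = 0\<^sub>v d" using Ac Xc w by simp
        moreover have "(A * X) *\<^sub>v w \<in> carrier_vec d" "(X * A) *\<^sub>v w \<in> carrier_vec d"
          using Ac Xc w by auto
        ultimately have "(X * A) *\<^sub>v w = 0\<^sub>v d" using vec_minus_eq0 by metis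
        thus ?thesis using ii Ac Xc w by simp
      next
        case False
        hence "rho i m * X = X * rho i m" using comm im by simp
        hence "X *\<^sub>v (rho i m *\<^sub>v w) = rho i m *\<^sub>v (X *\<^sub>v w)"
          using R Xc w by (metis assoc_mult_mat_vec)
        thus ?thesis using w R by simp
      qed
    qed
    thus ?thesis using X_def by simp
  next
    case True
    have "A * X - X * A = 0\<^sub>m d d" using AX True Xc by simp
    moreover have "A * X \<in> carrier_mat d d" "X * A \<in> carrier_mat d d" using Ac Xc by auto
    ultimately have commA: "A * X = X * A" using mat_minus_eq0 by blast
    have commall: "rho i m * X = X * rho i m" if im: "i \<le> k" "m \<le> N" for i m
      using comm[OF im] commA A_def by (cases "i + m = 0") auto
    obtain v \<mu> where v: "v \<in> carrier_vec d" "v \<noteq> 0\<^sub>v d" "X *\<^sub>v v = \<mu> \<cdot>\<^sub>v v"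
      using ex_eigen[OF Xc d0] by blast
    define M where "M = X - \<mu> \<cdot>\<^sub>m 1\<^sub>m d"
    have Mc: "M \<in> carrier_mat d d" using Xc M_def by (simp add: minus_carrier_mat)
    have Mv: "M *\<^sub>v w = X *\<^sub>v w - \<mu> \<cdot>\<^sub>v w" if "w \<in> carrier_vec d" for w
      using that Xc minus_mult_distrib_mat_vec[of X d d "\<mu> \<cdot>\<^sub>m 1\<^sub>m d" w] smult_mat_vec_assoc[of "1\<^sub>m d" d d w \<mu>] unfolding M_def by simp
    have "M = 0\<^sub>m d d"
    proof (rule mat_zero_of_kernel[OF Mc _ irr])
      show "\<forall>i m. i \<le> k \<longrightarrow> m \<le> N \<longrightarrow> rho i m \<in> carrier_mat d d" using car by blast
    next
      show "v \<in> carrier_vec d" "v \<noteq> 0\<^sub>v d" using v by auto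
      show "M *\<^sub>v v = 0\<^sub>v d" using Mv[OF v(1)] v by simp
    next
      fix i m and w :: "complex vec"
      assume im: "i \<le> k" "m \<le> N" and w: "w \<in> carrier_vec d" "M *\<^sub>v w = 0\<^sub>v d"
      have R: "rho i m \<in> carrier_mat d d" using car im by simp
      have Xw: "X *\<^sub>v w = \<mu> \<cdot>\<^sub>v w" using w Mv[OF w(1)] Xc
        vec_minus_eq0[of "X *\<^sub>v w" d "\<mu> \<cdot>\<^sub>v w"] by auto
      have "X *\<^sub>v (rho i m *\<^sub>v w) = rho i m *\<^sub>v (X *\<^sub>v w)"
        using R Xc w commall[OF im] by (metis assoc_mult_mat_vec)
      also have "\<dots> = \<mu> \<cdot>\<^sub>v (rho i m *\<^sub>v w)" using Xw R w by (simp add: mult_mat_vec)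
      finally show "M *\<^sub>v (rho i m *\<^sub>v w) = 0\<^sub>v d" using Mv[of "rho i m *\<^sub>v w"] R w by simp
    qed
    hence "X - \<mu> \<cdot>\<^sub>m 1\<^sub>m d = 0\<^sub>m d d" using M_def by simp
    moreover have "\<mu> \<cdot>\<^sub>m 1\<^sub>m d \<in> carrier_mat d d" by simp
    ultimately have Xmu: "X = \<mu> \<cdot>\<^sub>m 1\<^sub>m d" using mat_minus_eq0 Xc by blast
    have jp: "of_nat j = p * of_nat n" using True c_def by simp
    have n0: "n \<noteq> 0"
    proof
      assume "n = 0"
      with jp have "j = 0" by simp
      with \<open>n = 0\<close> less.prems show False by simp
    qed
    have j0: "j \<noteq> 0"
    proof
      assume "j = 0"
      with jp have "p * of_nat n = 0" by simp
      with p n0 show False by simp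
    qed
    define g where "g = gcoef p j 0 0 n"
    have "g = - of_nat (j * (n + 2))" unfolding g_def gcoef_def using jp
      by (simp add: algebra_simps)
    moreover have "(of_nat (j * (n + 2)) :: complex) \<noteq> 0"
      using j0 by (simp only: of_nat_eq_0_iff) simp
    ultimately have g0: "g \<noteq> 0" by (metis neg_equal_0_iff_equal)
    have bj: "rho j 0 * rho 0 n - rho 0 n * rho j 0 = g \<cdot>\<^sub>m X"
      using br[of j 0 0 n] less.prems unfolding g_def X_def by simp
    have "trc (rho j 0 * rho 0 n - rho 0 n * rho j 0) d = 0"
      using car[of j 0] car[of 0 n] less.prems
      by (simp add: trc_minus trc_comm[of "rho j 0" d "rho 0 n"])
    hence "g * trc X d = 0" using bj Xc by (simp add: trc_smult)
    hence "trc X d = 0" using g0 by simp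
    hence "\<mu> * of_nat d = 0" using Xmu by (simp add: trc_smult trc_one)
    hence "\<mu> = 0" using d0 by simp
    thus ?thesis using Xmu X_def by simp
  qed
qed

theorem lemma3p3:
  fixes p :: complex and k N d :: nat and rho :: "nat \<Rightarrow> nat \<Rightarrow> complex mat"
  assumes "p \<noteq> 0"
    and "is_GkN_rep p k N d rho"
    and "GkN_nontrivial k N d rho"
    and "GkN_irreducible k N d rho"
  shows "d = 1"
proof -
  have car: "\<And>i m. i \<le> k \<Longrightarrow> m \<le> N \<Longrightarrow> rho i m \<in> carrier_mat d d"
    using assms(2) unfolding is_GkN_rep_def by blast
  have d0: "d > 0" using assms(4) unfolding GkN_irreducible_def by blast
  have van: "\<And>j n. j \<le> k \<Longrightarrow> n \<le> N \<Longrightarrow> 0 < j + n \<Longrightarrow> rho j n = 0\<^sub>m d d"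
    using vanish[OF assms(1,2,4)] by blast
  define A where "A = rho 0 0"
  have Ac: "A \<in> carrier_mat d d" using car A_def by simp
  obtain v \<mu> where v: "v \<in> carrier_vec d" "v \<noteq> 0\<^sub>v d" "A *\<^sub>v v = \<mu> \<cdot>\<^sub>v v"
    using ex_eigen[OF Ac d0] by blast
  define W where "W = {w. \<exists>c. w = c \<cdot>\<^sub>v v}"
  have sub: "cvec_subspace d W"
    unfolding cvec_subspace_def
  proof (intro conjI ballI allI)
    show "W \<subseteq> carrier_vec d" using v unfolding W_def by auto
    have "0\<^sub>v d = 0 \<cdot>\<^sub>v v" using v by (intro eq_vecI) auto
    thus "0\<^sub>v d \<in> W" unfolding W_def by blast
  next
    fix x y assume "x \<in> W" "y \<in> W"
    then obtain a b where "x = a \<cdot>\<^sub>v v" "y = b \<cdot>\<^sub>v v" unfolding W_def by blast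
    hence "x + y = (a + b) \<cdot>\<^sub>v v" by (simp add: add_smult_distrib_vec)
    thus "x + y \<in> W" unfolding W_def by blast
  next
    fix c x assume "x \<in> W"
    then obtain a where "x = a \<cdot>\<^sub>v v" unfolding W_def by blast
    hence "c \<cdot>\<^sub>v x = (c * a) \<cdot>\<^sub>v v" by (simp add: smult_smult_assoc)
    thus "c \<cdot>\<^sub>v x \<in> W" unfolding W_def by blast
  qed
  have "GkN_submodule k N d rho W"
    unfolding GkN_submodule_def
  proof (intro conjI allI impI ballI sub)
    fix i m x assume im: "i \<le> k" "m \<le> N" and x: "x \<in> W"
    then obtain a where xa: "x = a \<cdot>\<^sub>v v" unfolding W_def by blast
    show "rho i m *\<^sub>v x \<in> W"
    proof (cases "i + m = 0")
      case True
      hence "rho i m = A" using A_def by simp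
      hence "rho i m *\<^sub>v x = a \<cdot>\<^sub>v (\<mu> \<cdot>\<^sub>v v)" using xa v Ac by (simp add: mult_mat_vec)
      also have "\<dots> = (a * \<mu>) \<cdot>\<^sub>v v" by (simp add: smult_smult_assoc)
      finally show ?thesis unfolding W_def by blast
    next
      case False
      hence "rho i m = 0\<^sub>m d d" using van im by simp
      hence "rho i m *\<^sub>v x = 0\<^sub>v d" using xa v by (intro eq_vecI) auto
      also have "\<dots> = 0 \<cdot>\<^sub>v v" using v by (intro eq_vecI) auto
      finally show ?thesis unfolding W_def by blast
    qed
  qed
  with assms(4) have "W = {0\<^sub>v d} \<or> W = carrier_vec d" unfolding GkN_irreducible_def by blast
  moreover have "v = 1 \<cdot>\<^sub>v v" by simp
  hence "v \<in> W" unfolding W_def by blast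
  ultimately have WC: "W = carrier_vec d" using v by blast
  show "d = 1"
  proof (rule ccontr)
    assume "d \<noteq> 1"
    hence d2: "1 < d" using d0 by simp
    have "unit_vec d 0 \<in> W" "unit_vec d 1 \<in> W" using WC by auto
    then obtain a b where a: "unit_vec d 0 = a \<cdot>\<^sub>v v" and b: "unit_vec d 1 = b \<cdot>\<^sub>v v"
      unfolding W_def by blast
    have "(unit_vec d 0) $ 0 = a * v $ 0" "(unit_vec d 0) $ 1 = a * v $ 1"
      "(unit_vec d 1) $ 1 = b * v $ 1"
      using a b v d2 by auto
    hence e: "1 = a * v $ 0" "0 = a * v $ 1" "1 = b * v $ 1" using d2 by auto
    from e(1) have "a \<noteq> 0" by auto
    with e(2) have "v $ 1 = 0" by simp
    with e(3) show False by simp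
  qed
qed

end
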